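(* Let $\Omega\subset\mathbb{S}^2$ be a domain and $H>0$. Let $$\mathfrak{C}_{\Omega}(H)=\{u\colon\overline{\Omega}\to [0,H] \;:\; u \text{ piecewise } C^1\}.$$ Then $\inf\{R_1[u]\colon u\in\mathfrak{C}_{\Omega}(H)\}=0$. Consequently, $R_1$ has no minimizer in $\mathfrak{C}_{\Omega}(H)$.
   Context: For a function $u$ on a domain $\Omega\subset\mathbb{S}^2$ (describing the radial graph $\{e^{u(\xi)}\xi:\xi\in\Omega\}$), with $\nabla_{\mathbb{S}^2}$ the gradient for the round metric and $d\Omega$ the round area element, the (scale-invariant free expansion) resistance functional is $$R_1[u]=\int_{\Omega}\frac{1}{1+|\nabla_{\mathbb{S}^2}u|^2}\,d\Omega.$$ *)

theory Defs
  imports "HOL-Analysis.Analysis"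
begin

definition S2 :: "(real^3) set" where
  "S2 = sphere 0 1"

text \<open>Cone over a subset A of S^2 inside the unit ball; the round area measure
  satisfies area(A) = 3 * Lebesgue volume of this cone, and more generally
  the integral over A of g w.r.t. the round area element equals
  3 * the Lebesgue integral over the cone of g(x/|x|).\<close>
definition sph_cone :: "(real^3) set \<Rightarrow> (real^3) set" where
  "sph_cone A = {x. x \<noteq> 0 \<and> norm x \<le> 1 \<and> x /\<^sub>R norm x \<in> A}"

definition sph_integral :: "(real^3) set \<Rightarrow> ((real^3) \<Rightarrow> real) \<Rightarrow> real" where
  "sph_integral A g =
     3 * (LINT x|lebesgue. indicator (sph_cone A) x * g (x /\<^sub>R norm x))"

definition sph_null :: "(real^3) set \<Rightarrow> bool" where
  "sph_null A \<longleftrightarrow> A \<subseteq> S2 \<and> sph_cone A \<in> null_sets lebesgue"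

definition sph_interior :: "(real^3) set \<Rightarrow> (real^3) set" where
  "sph_interior K = {x \<in> K. \<exists>e>0. S2 \<inter> ball x e \<subseteq> K}"

definition sph_grad :: "((real^3) \<Rightarrow> real) \<Rightarrow> real^3 \<Rightarrow> real^3" where
  "sph_grad u \<xi> = (THE g. g \<bullet> \<xi> = 0 \<and> (u has_derivative (\<lambda>v. g \<bullet> v)) (at \<xi> within S2))"

definition sph_domain :: "(real^3) set \<Rightarrow> bool" where
  "sph_domain \<Omega> \<longleftrightarrow> \<Omega> \<noteq> {} \<and> connected \<Omega> \<and> openin (top_of_set S2) \<Omega>"

definition piecewise_C1_on :: "(real^3) set \<Rightarrow> ((real^3) \<Rightarrow> real) \<Rightarrow> bool" where
  "piecewise_C1_on D u \<longleftrightarrow> continuous_on D u \<and>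
     (\<exists>\<K>. finite \<K> \<and> D \<subseteq> \<Union>\<K> \<and>
        (\<forall>K\<in>\<K>. closed K \<and> K \<subseteq> S2 \<and> sph_null (K - sph_interior K) \<and>
           (\<exists>U g g'. open U \<and> K \<subseteq> U \<and>
              (\<forall>x\<in>U. (g has_derivative (\<lambda>v. g' x \<bullet> v)) (at x)) \<and>
              continuous_on U g' \<and> (\<forall>x\<in>K \<inter> D. g x = u x))))"

definition frakC :: "(real^3) set \<Rightarrow> real \<Rightarrow> ((real^3) \<Rightarrow> real) set" where
  "frakC \<Omega> H = {u. u ` closure \<Omega> \<subseteq> {0..H} \<and> piecewise_C1_on (closure \<Omega>) u}"

definition R1 :: "(real^3) set \<Rightarrow> ((real^3) \<Rightarrow> real) \<Rightarrow> real" where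
  "R1 \<Omega> u = sph_integral \<Omega> (\<lambda>\<xi>. 1 / (1 + (norm (sph_grad u \<xi>))\<^sup>2))"

end

theory Submission
  imports Defs
begin


lemma S2_iff: "x \<in> S2 \<longleftrightarrow> norm x = 1"
  by (simp add: S2_def)

lemma S2_inner_self: "x \<in> S2 \<Longrightarrow> x \<bullet> x = 1"
  by (simp add: S2_iff dot_square_norm)

lemma tangent_deriv_zero:
  assumes "\<xi> \<in> S2"
  shows "((\<lambda>y. \<xi> \<bullet> y) has_derivative (\<lambda>v. 0)) (at \<xi> within S2)"
  unfolding has_derivative_within_alt
proof (intro conjI allI impI)
  show "bounded_linear (\<lambda>v::real^3. 0::real)" by simp
  fix e :: real assume "e > 0"
  show "\<exists>d>0. \<forall>y\<in>S2. norm (y - \<xi>) < d \<longrightarrow> norm (\<xi> \<bullet> y - \<xi> \<bullet> \<xi> - 0) \<le> e * norm (y - \<xi>)"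
  proof (intro exI[of _ "2*e"] conjI ballI impI)
    show "0 < 2*e" using \<open>e>0\<close> by simp
    fix y assume y: "y \<in> S2" "norm (y - \<xi>) < 2*e"
    have "(norm (y - \<xi>))\<^sup>2 = y \<bullet> y - 2 * (\<xi> \<bullet> y) + \<xi> \<bullet> \<xi>"
      by (simp add: power2_norm_eq_inner inner_diff_left inner_diff_right inner_commute)
    then have eq: "\<xi> \<bullet> y - \<xi> \<bullet> \<xi> = - (norm (y - \<xi>))\<^sup>2 / 2"
      using S2_inner_self[OF y(1)] S2_inner_self[OF assms] by simp
    have "(norm (y - \<xi>))\<^sup>2 / 2 \<le> e * norm (y - \<xi>)"
    proof -
      have "norm (y - \<xi>) / 2 \<le> e" using y(2) by simp
      then have "norm (y - \<xi>) * (norm (y - \<xi>) / 2) \<le> norm (y - \<xi>) * e"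
        by (rule mult_left_mono) simp
      then show ?thesis by (simp add: power2_eq_square mult.commute)
    qed
    then show "norm (\<xi> \<bullet> y - \<xi> \<bullet> \<xi> - 0) \<le> e * norm (y - \<xi>)"
      by (simp add: eq)
  qed
qed

lemma tangent_deriv_unique:
  assumes xi: "\<xi> \<in> S2" and q: "q \<bullet> \<xi> = 0" and p: "p \<bullet> \<xi> = 0"
    and dq: "(f has_derivative (\<lambda>v. q \<bullet> v)) (at \<xi> within S2)"
    and dp: "(f has_derivative (\<lambda>v. p \<bullet> v)) (at \<xi> within S2)"
  shows "q = p"
proof (rule ccontr)
  assume "q \<noteq> p"
  define h where "h = q - p"
  have hne: "norm h > 0" using \<open>q \<noteq> p\<close> by (simp add: h_def)
  have hxi: "h \<bullet> \<xi> = 0" using p q by (simp add: h_def inner_diff_left)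
  have "((\<lambda>y. f y - f y) has_derivative (\<lambda>v. q \<bullet> v - p \<bullet> v)) (at \<xi> within S2)"
    by (rule has_derivative_diff[OF dq dp])
  then have d0: "((\<lambda>y. 0) has_derivative (\<lambda>v. h \<bullet> v)) (at \<xi> within S2)"
    by (simp add: h_def inner_diff_left)
  define e where "e = norm h / 8"
  have "e > 0" using hne by (simp add: e_def)
  then obtain d where d: "d > 0" and dd: "\<And>y. y \<in> S2 \<Longrightarrow> norm (y - \<xi>) < d \<Longrightarrow> norm (0 - 0 - h \<bullet> (y - \<xi>)) \<le> e * norm (y - \<xi>)"
    using d0 unfolding has_derivative_within_alt by meson
  define n where "n = h /\<^sub>R norm h"
  have nn: "n \<bullet> n = 1" using hne by (simp add: n_def dot_square_norm)
  have nxi: "n \<bullet> \<xi> = 0" "\<xi> \<bullet> n = 0" using hxi by (simp_all add: n_def inner_commute)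
  have hn: "h \<bullet> n = norm h" using hne by (simp add: n_def dot_square_norm power2_eq_square)
  define t where "t = d / 4"
  have t: "t > 0" using d by (simp add: t_def)
  define r where "r = sqrt (1 + t\<^sup>2)"
  have r1: "r \<ge> 1" by (simp add: r_def)
  have rt: "r \<le> 1 + t"
  proof -
    have "1 + t\<^sup>2 \<le> (1 + t)\<^sup>2" using t by (simp add: power2_eq_square algebra_simps)
    then have "sqrt (1 + t\<^sup>2) \<le> sqrt ((1 + t)\<^sup>2)" by (rule real_sqrt_le_mono)
    then show ?thesis using t by (simp add: r_def)
  qed
  have nv: "(norm (\<xi> + t *\<^sub>R n))\<^sup>2 = 1 + t\<^sup>2"
    unfolding power2_norm_eq_inner
    by (simp add: inner_add_left inner_add_right S2_inner_self[OF xi] nn nxi inner_commute power2_eq_square)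
  have nv2: "norm (\<xi> + t *\<^sub>R n) = r"
    unfolding r_def by (metis nv norm_ge_zero real_sqrt_unique)
  define y where "y = (\<xi> + t *\<^sub>R n) /\<^sub>R r"
  have yS: "y \<in> S2" using nv2 r1 by (simp add: S2_iff y_def)
  have ydiff: "y - \<xi> = ((1 - r) *\<^sub>R \<xi> + t *\<^sub>R n) /\<^sub>R r"
    using r1 by (simp add: y_def algebra_simps)
  have nyd: "norm (y - \<xi>) \<le> 2 * t / r"
  proof -
    have "norm ((1 - r) *\<^sub>R \<xi> + t *\<^sub>R n) \<le> norm ((1 - r) *\<^sub>R \<xi>) + norm (t *\<^sub>R n)"
      by (rule norm_triangle_ineq)
    also have "\<dots> = (r - 1) + t"
      using r1 t xi nn by (simp add: S2_iff norm_eq_sqrt_inner)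
    also have "\<dots> \<le> 2 * t" using rt by simp
    finally show ?thesis using r1 by (simp add: ydiff divide_simps)
  qed
  have "2 * t / r \<le> 2 * t" using r1 t by (simp add: divide_simps)
  then have "norm (y - \<xi>) < d" using nyd t by (simp add: t_def)
  from dd[OF yS this] have ineq: "\<bar>h \<bullet> (y - \<xi>)\<bar> \<le> e * norm (y - \<xi>)" by simp
  have hy: "h \<bullet> (y - \<xi>) = t * norm h / r"
    using r1 by (simp add: ydiff hxi hn inner_add_right divide_simps)
  have pos: "t * norm h / r \<ge> 0" using t hne r1 by simp
  have "t * norm h / r \<le> e * norm (y - \<xi>)" using ineq unfolding hy using pos by (simp only: abs_of_nonneg)
  also have "\<dots> \<le> e * (2 * t / r)" using nyd \<open>e>0\<close> by (intro mult_left_mono) auto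
  finally have A: "t * norm h / r \<le> e * (2 * t / r)" .
  have "e * (2 * t / r) = (e * 2 * t) / r" by simp
  with A have "t * norm h / r \<le> (e * 2 * t) / r" by simp
  then have "t * norm h \<le> e * 2 * t" using r1 by (simp add: divide_right_mono_neg divide_le_cancel)
  also have "e * 2 * t = t * norm h / 4" by (simp add: e_def)
  finally have "t * norm h \<le> t * norm h / 4" .
  moreover have "t * norm h > 0" using t hne by simp
  ultimately show False by linarith
qed


lemma sph_grad_eq:
  assumes xi: "\<xi> \<in> S2" and e: "e > 0" and eq: "\<And>y. y \<in> S2 \<Longrightarrow> dist y \<xi> < e \<Longrightarrow> u y = g y"
    and dg: "(g has_derivative (\<lambda>v. w \<bullet> v)) (at \<xi>)"
  shows "sph_grad u \<xi> = w - (w \<bullet> \<xi>) *\<^sub>R \<xi>"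
proof -
  define p where "p = w - (w \<bullet> \<xi>) *\<^sub>R \<xi>"
  define c where "c = w \<bullet> \<xi>"
  have pxi: "p \<bullet> \<xi> = 0" using S2_inner_self[OF xi] by (simp add: p_def inner_diff_left)
  have d1: "(g has_derivative (\<lambda>v. w \<bullet> v)) (at \<xi> within S2)"
    using dg by (rule has_derivative_at_withinI)
  have d2: "((\<lambda>y. c * (\<xi> \<bullet> y)) has_derivative (\<lambda>v. c * 0)) (at \<xi> within S2)"
    by (rule has_derivative_mult_right[OF tangent_deriv_zero[OF xi]])
  have d3: "((\<lambda>y. c * (\<xi> \<bullet> y)) has_derivative (\<lambda>v. c * (\<xi> \<bullet> v))) (at \<xi> within S2)"
    by (intro has_derivative_mult_right bounded_linear.has_derivative[OF bounded_linear_inner_right] has_derivative_ident)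
  have "((\<lambda>y. g y - c * (\<xi> \<bullet> y) + c * (\<xi> \<bullet> y)) has_derivative (\<lambda>v. w \<bullet> v - c * (\<xi> \<bullet> v) + c * 0)) (at \<xi> within S2)"
    by (rule has_derivative_add[OF has_derivative_diff[OF d1 d3] d2])
  moreover have "(\<lambda>v. w \<bullet> v - c * (\<xi> \<bullet> v) + c * 0) = (\<lambda>v. p \<bullet> v)"
    by (rule ext) (simp add: p_def c_def inner_diff_left inner_diff_right inner_commute)
  ultimately have "(g has_derivative (\<lambda>v. p \<bullet> v)) (at \<xi> within S2)" by simp
  then have du: "(u has_derivative (\<lambda>v. p \<bullet> v)) (at \<xi> within S2)"
    by (rule has_derivative_transform_within[OF _ e xi]) (simp add: eq)
  have "(THE g. g \<bullet> \<xi> = 0 \<and> (u has_derivative (\<lambda>v. g \<bullet> v)) (at \<xi> within S2)) = p"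
  proof (rule the_equality)
    show "p \<bullet> \<xi> = 0 \<and> (u has_derivative (\<lambda>v. p \<bullet> v)) (at \<xi> within S2)" using pxi du by simp
    fix q assume "q \<bullet> \<xi> = 0 \<and> (u has_derivative (\<lambda>v. q \<bullet> v)) (at \<xi> within S2)"
    then show "q = p" using tangent_deriv_unique[OF xi _ pxi _ du] by blast
  qed
  then show ?thesis by (simp add: sph_grad_def p_def)
qed



lemma measurable_AE_lebesgue:
  fixes f g :: "'a::euclidean_space \<Rightarrow> real"
  assumes f: "f \<in> borel_measurable lebesgue" and ae: "AE x in lebesgue. f x = g x"
  shows "g \<in> borel_measurable lebesgue"
proof (rule measurableI)
  fix A :: "real set" assume A: "A \<in> sets borel"
  have "f -` A \<inter> space lebesgue \<in> sets lebesgue" using f A by (rule measurable_sets)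
  then show "g -` A \<inter> space lebesgue \<in> sets lebesgue"
    by (rule completion.in_sets_AE[rotated]) (use ae in \<open>auto elim!: eventually_mono\<close>)
qed auto

lemma sph_interior_open:
  assumes "x \<in> sph_interior K"
  obtains e where "e > 0" "\<And>y. y \<in> S2 \<Longrightarrow> dist y x < e \<Longrightarrow> y \<in> sph_interior K"
proof -
  from assms obtain e where e: "e > 0" "S2 \<inter> ball x e \<subseteq> K" by (auto simp: sph_interior_def)
  have "y \<in> sph_interior K" if y: "y \<in> S2" "dist y x < e" for y
  proof -
    have "S2 \<inter> ball y (e - dist y x) \<subseteq> K"
    proof
      fix z assume z: "z \<in> S2 \<inter> ball y (e - dist y x)"
      then have "dist x z < e" using dist_triangle[of x z y] by (auto simp: dist_commute)
      then show "z \<in> K" using e(2) z by auto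
    qed
    moreover have "y \<in> K" using e(2) y by (auto simp: dist_commute)
    ultimately show ?thesis using y(2) by (auto simp: sph_interior_def intro!: exI[of _ "e - dist y x"])
  qed
  with e(1) that show ?thesis by blast
qed

lemma sph_interior_subset: "K \<subseteq> S2 \<Longrightarrow> sph_interior K \<subseteq> S2"
  by (auto simp: sph_interior_def)

lemma openin_sph_interior:
  assumes "K \<subseteq> S2" shows "openin (top_of_set S2) (sph_interior K)"
  unfolding openin_euclidean_subtopology_iff
proof (intro conjI ballI)
  show "sph_interior K \<subseteq> S2" using assms by (rule sph_interior_subset)
  fix x assume xin: "x \<in> sph_interior K"
  obtain e where "e > 0" "\<And>y. y \<in> S2 \<Longrightarrow> dist y x < e \<Longrightarrow> y \<in> sph_interior K"
    using sph_interior_open[OF xin] by metis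
  then show "\<exists>e>0. \<forall>x'\<in>S2. dist x' x < e \<longrightarrow> x' \<in> sph_interior K" by blast
qed

lemma sph_domain_sub: "sph_domain \<Omega> \<Longrightarrow> \<Omega> \<subseteq> S2"
  unfolding sph_domain_def by (metis openin_subset topspace_euclidean_subtopology)

lemma sph_domain_nbhd:
  assumes "sph_domain \<Omega>" "x \<in> \<Omega>"
  obtains e where "e > 0" "\<And>y. y \<in> S2 \<Longrightarrow> dist y x < e \<Longrightarrow> y \<in> \<Omega>"
  using assms unfolding sph_domain_def openin_euclidean_subtopology_iff by blast

lemma local_grad:
  assumes dom: "sph_domain \<Omega>" and U: "open U" "K \<subseteq> U"
    and dg: "\<And>x. x \<in> U \<Longrightarrow> (g has_derivative (\<lambda>v. g' x \<bullet> v)) (at x)"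
    and agree: "\<And>x. x \<in> K \<inter> closure \<Omega> \<Longrightarrow> g x = u x"
    and y: "y \<in> \<Omega>" "y \<in> sph_interior K"
  shows "sph_grad u y = g' y - (g' y \<bullet> y) *\<^sub>R y"
proof -
  have yS: "y \<in> S2" using y(1) sph_domain_sub[OF dom] by blast
  obtain e1 where e1: "e1 > 0" "S2 \<inter> ball y e1 \<subseteq> K" using y(2) by (auto simp: sph_interior_def)
  obtain e2 where e2: "e2 > 0" "\<And>z. z \<in> S2 \<Longrightarrow> dist z y < e2 \<Longrightarrow> z \<in> \<Omega>"
    using sph_domain_nbhd[OF dom y(1)] by blast
  have yU: "y \<in> U" using y(2) U(2) by (auto simp: sph_interior_def)
  show ?thesis
  proof (rule sph_grad_eq[OF yS _ _ dg[OF yU]])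
    show "min e1 e2 > 0" using e1 e2 by simp
    fix z assume z: "z \<in> S2" "dist z y < min e1 e2"
    then have "z \<in> K" using e1(2) by (auto simp: dist_commute)
    moreover have "z \<in> closure \<Omega>" using e2(2)[of z] z closure_subset by auto
    ultimately show "u z = g z" using agree by auto
  qed
qed


lemma open_sets_lebesgue: "open (W::(real^3) set) \<Longrightarrow> W \<in> sets lebesgue"
  by (metis borel_open sets_completionI_sets sets_lborel)

lemma closed_sets_lebesgue: "closed (W::(real^3) set) \<Longrightarrow> W \<in> sets lebesgue"
  by (metis borel_closed sets_completionI_sets sets_lborel)

lemma cont_normalize: "continuous_on (-{0}) (\<lambda>x::real^3. x /\<^sub>R norm x)"
  using continuous_on_Borsuk_map[of 0 "-{0}"] by simp

lemma cone_openin_sets: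
  assumes "openin (top_of_set S2) A"
  shows "sph_cone A \<in> sets lebesgue"
proof -
  obtain V where V: "open V" "A = S2 \<inter> V" using assms by (auto simp: openin_open)
  define W where "W = (-{0}) \<inter> (\<lambda>x::real^3. x /\<^sub>R norm x) -` V"
  have "open W" unfolding W_def by (rule continuous_open_preimage[OF cont_normalize]) (auto simp: V)
  have eq: "sph_cone A = cball 0 1 \<inter> W"
    by (auto simp: sph_cone_def W_def V S2_iff)
  show ?thesis unfolding eq
    by (intro sets.Int open_sets_lebesgue closed_sets_lebesgue \<open>open W\<close>) simp
qed

lemma cone_mono: "A \<subseteq> B \<Longrightarrow> sph_cone A \<subseteq> sph_cone B"
  by (auto simp: sph_cone_def)

lemma cone_norm: "x \<in> sph_cone A \<Longrightarrow> x \<noteq> 0 \<and> norm x \<le> 1 \<and> x /\<^sub>R norm x \<in> A"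
  by (auto simp: sph_cone_def)

lemma R1_integrable:
  assumes dom: "sph_domain \<Omega>" and pw: "piecewise_C1_on (closure \<Omega>) u"
  shows "integrable lebesgue (\<lambda>x. indicator (sph_cone \<Omega>) x * (1 / (1 + (norm (sph_grad u (x /\<^sub>R norm x)))\<^sup>2)))"
proof -
  define F where "F \<xi> = 1 / (1 + (norm (sph_grad u \<xi>))\<^sup>2)" for \<xi>
  obtain KK where fin: "finite KK" and cov: "closure \<Omega> \<subseteq> \<Union>KK"
    and KK: "\<forall>K\<in>KK. closed K \<and> K \<subseteq> S2 \<and> sph_null (K - sph_interior K) \<and>
           (\<exists>U g g'. open U \<and> K \<subseteq> U \<and>
              (\<forall>x\<in>U. (g has_derivative (\<lambda>v. g' x \<bullet> v)) (at x)) \<and>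
              continuous_on U g' \<and> (\<forall>x\<in>K \<inter> closure \<Omega>. g x = u x))"
    using pw unfolding piecewise_C1_on_def by (elim conjE exE) (rule that)
  define A where "A = \<Omega> \<inter> \<Union>(sph_interior ` KK)"
  have AS: "A \<subseteq> S2" using sph_domain_sub[OF dom] by (auto simp: A_def)
  have Aopen: "openin (top_of_set S2) A"
    unfolding A_def using dom KK by (intro openin_Int openin_Union) (auto simp: sph_domain_def intro!: openin_sph_interior)
  have contA: "continuous_on A F"
    unfolding continuous_on_eq_continuous_within
  proof
    fix \<xi> assume "\<xi> \<in> A"
    then obtain K where K: "K \<in> KK" "\<xi> \<in> \<Omega>" "\<xi> \<in> sph_interior K" by (auto simp: A_def)
    then obtain U g g' where U: "open U" "K \<subseteq> U" and dg: "\<And>x. x \<in> U \<Longrightarrow> (g has_derivative (\<lambda>v. g' x \<bullet> v)) (at x)"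
      and cg: "continuous_on U g'" and ag: "\<And>x. x \<in> K \<inter> closure \<Omega> \<Longrightarrow> g x = u x"
      using KK by (metis (no_types, lifting))
    obtain e1 where e1: "e1 > 0" "\<And>y. y \<in> S2 \<Longrightarrow> dist y \<xi> < e1 \<Longrightarrow> y \<in> sph_interior K"
      using sph_interior_open[OF K(3)] by metis
    obtain e2 where e2: "e2 > 0" "\<And>y. y \<in> S2 \<Longrightarrow> dist y \<xi> < e2 \<Longrightarrow> y \<in> \<Omega>"
      using sph_domain_nbhd[OF dom K(2)] by metis
    define Fh where "Fh y = 1 / (1 + (norm (g' y - (g' y \<bullet> y) *\<^sub>R y))\<^sup>2)" for y
    have "continuous_on U Fh" unfolding Fh_def
      by (intro continuous_intros cg) (smt (verit) zero_le_power2)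
    moreover have "\<xi> \<in> U" using K(3) U(2) by (auto simp: sph_interior_def)
    ultimately have "isCont Fh \<xi>" using U(1) continuous_on_eq_continuous_at by blast
    then have "continuous (at \<xi> within A) Fh" by (rule continuous_at_imp_continuous_at_within)
    then show "continuous (at \<xi> within A) F"
    proof (rule continuous_transform_within[of _ _ _ "min e1 e2"])
      show "0 < min e1 e2" using e1 e2 by simp
      show "\<xi> \<in> A" by fact
      fix y assume y: "y \<in> A" "dist y \<xi> < min e1 e2"
      have "y \<in> S2" using y AS by auto
      then have "sph_grad u y = g' y - (g' y \<bullet> y) *\<^sub>R y"
        using local_grad[OF dom U dg ag] e1 e2 y by auto
      then show "Fh y = F y" by (simp add: Fh_def F_def)
    qed
  qed
  define N where "N x = x /\<^sub>R norm x" for x :: "real^3"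
  have contC: "continuous_on (sph_cone A) (\<lambda>x. F (N x))"
    unfolding N_def
    by (rule continuous_on_compose2[OF contA continuous_on_subset[OF cont_normalize]]) (auto simp: sph_cone_def)
  have setsC: "sph_cone A \<in> sets lebesgue" by (rule cone_openin_sets[OF Aopen])
  have m1: "(\<lambda>x. if x \<in> sph_cone A then F (N x) else 0) \<in> borel_measurable lebesgue"
    by (rule borel_measurable_if_I[OF continuous_imp_measurable_on_sets_lebesgue[OF contC setsC] setsC])
  have negl: "negligible (\<Union>K\<in>KK. sph_cone (K - sph_interior K))"
    using fin KK by (intro negligible_Union) (auto simp: sph_null_def negligible_iff_null_sets)
  have sub: "sph_cone \<Omega> - sph_cone A \<subseteq> (\<Union>K\<in>KK. sph_cone (K - sph_interior K))"
  proof
    fix x assume x: "x \<in> sph_cone \<Omega> - sph_cone A"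
    then have "N x \<in> \<Omega>" "N x \<notin> A" by (auto simp: sph_cone_def N_def)
    moreover have "N x \<in> closure \<Omega>" using \<open>N x \<in> \<Omega>\<close> closure_subset by blast
    ultimately obtain K where "K \<in> KK" "N x \<in> K" "N x \<notin> sph_interior K" using cov by (auto simp: A_def)
    then show "x \<in> (\<Union>K\<in>KK. sph_cone (K - sph_interior K))" using x by (auto simp: sph_cone_def N_def)
  qed
  have ae: "AE x in lebesgue. (if x \<in> sph_cone A then F (N x) else 0) = indicator (sph_cone \<Omega>) x * F (N x)"
    unfolding eventually_ae_filter_negligible
  proof (intro exI conjI)
    show "negligible (\<Union>K\<in>KK. sph_cone (K - sph_interior K))" by (rule negl)
    have "sph_cone A \<subseteq> sph_cone \<Omega>" by (rule cone_mono) (auto simp: A_def)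
    then show "{x. \<not> (if x \<in> sph_cone A then F (N x) else 0) = indicator (sph_cone \<Omega>) x * F (N x)} \<subseteq> (\<Union>K\<in>KK. sph_cone (K - sph_interior K))"
      using sub by (auto simp: indicator_def split: if_splits)
  qed
  have meas: "(\<lambda>x. indicator (sph_cone \<Omega>) x * F (N x)) \<in> borel_measurable lebesgue"
    by (rule measurable_AE_lebesgue[OF m1 ae])
  have int1: "integrable lebesgue (indicator (cball (0::real^3) 1) :: real^3 \<Rightarrow> real)"
    using lmeasurable_cball[of "0::real^3" 1] by (intro integrable_real_indicator) (auto simp: fmeasurable_def)
  have "integrable lebesgue (\<lambda>x. indicator (sph_cone \<Omega>) x * F (N x))"
  proof (rule Bochner_Integration.integrable_bound[OF int1 meas], rule AE_I2)
    fix x :: "real^3"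
    have F01: "0 \<le> F y \<and> F y \<le> 1" for y
    proof -
      have "1 \<le> 1 + (norm (sph_grad u y))\<^sup>2" by simp
      then show ?thesis unfolding F_def by (simp add: divide_le_eq_1 add_pos_nonneg)
    qed
    show "norm (indicator (sph_cone \<Omega>) x * F (N x)) \<le> norm (indicator (cball 0 1) x :: real)"
    proof (cases "x \<in> sph_cone \<Omega>")
      case True
      then have "x \<in> cball 0 1" by (simp add: sph_cone_def)
      then show ?thesis using True F01[of "N x"] by simp
    next
      case False
      then show ?thesis by simp
    qed
  qed
  then show ?thesis by (simp add: F_def N_def)
qed


lemma cone_contains_ball:
  assumes dom: "sph_domain \<Omega>"
  obtains c r where "r > 0" "ball c r \<subseteq> sph_cone \<Omega>"
proof -
  obtain \<xi> where xi: "\<xi> \<in> \<Omega>" using dom by (auto simp: sph_domain_def)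
  have nxi: "norm \<xi> = 1" using xi sph_domain_sub[OF dom] by (auto simp: S2_iff)
  obtain e where e: "e > 0" "\<And>y. y \<in> S2 \<Longrightarrow> dist y \<xi> < e \<Longrightarrow> y \<in> \<Omega>"
    using sph_domain_nbhd[OF dom xi] by metis
  define e' where "e' = min e 1"
  have e': "e' > 0" "e' \<le> e" "e' \<le> 1" using e by (auto simp: e'_def)
  have "ball ((1/2) *\<^sub>R \<xi>) (e'/4) \<subseteq> sph_cone \<Omega>"
  proof
    fix x assume "x \<in> ball ((1/2) *\<^sub>R \<xi>) (e'/4)"
    then have d: "norm (x - (1/2) *\<^sub>R \<xi>) < e'/4" by (simp add: dist_norm norm_minus_commute)
    define d where "d = norm (x - (1/2) *\<^sub>R \<xi>)"
    have "\<bar>norm x - norm ((1/2) *\<^sub>R \<xi>)\<bar> \<le> d" unfolding d_def by (rule norm_triangle_ineq3)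
    then have nx: "\<bar>norm x - 1/2\<bar> \<le> d" using nxi by simp
    have dlt: "d < e'/4" using d by (simp add: d_def)
    have nxpos: "norm x > 0" using nx dlt e' by linarith
    have nx1: "norm x \<le> 1" using nx dlt e' by linarith
    have eq1: "x /\<^sub>R norm x - 2 *\<^sub>R x = (1 / norm x - 2) *\<^sub>R x" by (simp add: algebra_simps divide_inverse)
    have "norm (x /\<^sub>R norm x - 2 *\<^sub>R x) = \<bar>1 / norm x - 2\<bar> * norm x" by (simp add: eq1)
    also have "\<dots> = \<bar>1 - 2 * norm x\<bar>"
    proof -
      have "\<bar>1 / norm x - 2\<bar> * norm x = \<bar>(1 / norm x - 2) * norm x\<bar>" using nxpos by (simp add: abs_mult)
      also have "(1 / norm x - 2) * norm x = 1 - 2 * norm x" using nxpos by (simp add: algebra_simps)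
      finally show ?thesis .
    qed
    also have "\<dots> \<le> 2 * d" using nx by linarith
    finally have n1: "norm (x /\<^sub>R norm x - 2 *\<^sub>R x) \<le> 2 * d" .
    have n2: "norm (2 *\<^sub>R x - \<xi>) = 2 * d"
    proof -
      have "2 *\<^sub>R x - \<xi> = 2 *\<^sub>R (x - (1/2) *\<^sub>R \<xi>)" by (simp add: algebra_simps)
      then show ?thesis by (simp add: d_def)
    qed
    have "norm (x /\<^sub>R norm x - \<xi>) \<le> norm (x /\<^sub>R norm x - 2 *\<^sub>R x) + norm (2 *\<^sub>R x - \<xi>)"
      by (rule order_trans[OF _ norm_triangle_ineq]) simp
    then have "norm (x /\<^sub>R norm x - \<xi>) < e" using n1 n2 dlt e' by linarith
    then have "x /\<^sub>R norm x \<in> \<Omega>" using nxpos by (intro e(2)) (auto simp: S2_iff dist_norm)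
    then show "x \<in> sph_cone \<Omega>" using nxpos nx1 by (auto simp: sph_cone_def)
  qed
  then show ?thesis using that[of "e'/4"] e' by simp
qed

lemma R1_pos:
  assumes dom: "sph_domain \<Omega>" and pw: "piecewise_C1_on (closure \<Omega>) u"
  shows "R1 \<Omega> u > 0"
proof -
  define G where "G x = indicator (sph_cone \<Omega>) x * (1 / (1 + (norm (sph_grad u (x /\<^sub>R norm x)))\<^sup>2))" for x
  have int: "integrable lebesgue G" unfolding G_def by (rule R1_integrable[OF dom pw])
  have nn: "0 \<le> G x" for x by (simp add: G_def add_pos_nonneg)
  have pos: "G x > 0" if "x \<in> sph_cone \<Omega>" for x using that by (simp add: G_def add_pos_nonneg)
  have "integral\<^sup>L lebesgue G \<noteq> 0"
  proof
    assume "integral\<^sup>L lebesgue G = 0"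
    then have "AE x in lebesgue. G x = 0" using integral_nonneg_eq_0_iff_AE[OF int] nn by simp
    then obtain N where N: "negligible N" "{x. \<not> G x = 0} \<subseteq> N" unfolding eventually_ae_filter_negligible by blast
    obtain c r where cr: "r > 0" "ball c r \<subseteq> sph_cone \<Omega>" using cone_contains_ball[OF dom] by metis
    have "ball c r \<subseteq> N" using cr(2) N(2) pos by fastforce
    then have "negligible (ball c r)" using N(1) negligible_subset by blast
    moreover have "\<not> negligible (ball c r)" using cr(1) by (intro open_not_negligible) auto
    ultimately show False by blast
  qed
  moreover have "integral\<^sup>L lebesgue G \<ge> 0" using nn by (simp add: integral_nonneg_AE)
  ultimately have "integral\<^sup>L lebesgue G > 0" by simp
  moreover have "R1 \<Omega> u = 3 * integral\<^sup>L lebesgue G"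
    unfolding R1_def sph_integral_def G_def by simp
  ultimately show ?thesis by simp
qed



lemma norm3: "(norm (x::real^3))\<^sup>2 = (x$1)\<^sup>2 + (x$2)\<^sup>2 + (x$3)\<^sup>2"
  unfolding power2_norm_eq_inner by (simp add: inner_vec_def sum_3 power2_eq_square)

lemma comp_le1: "x \<in> S2 \<Longrightarrow> \<bar>x $ i\<bar> \<le> 1"
  using component_le_norm_cart[of x i] by (simp add: S2_iff)

lemma level_null:
  "negligible (sph_cone {\<xi> \<in> S2. \<xi> $ 3 = c})"
proof (cases "\<bar>c\<bar> \<le> 1")
  case False
  then have "{\<xi> \<in> S2. \<xi> $ 3 = c} = {}" using comp_le1 by fastforce
  then show ?thesis unfolding sph_cone_def by (simp only:) simp
next
  case True
  define a where "a = sqrt (1 - c\<^sup>2)"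
  have "\<bar>c\<bar>\<^sup>2 \<le> 1\<^sup>2" using True by (intro power_mono) auto
  then have "c\<^sup>2 \<le> 1" by simp
  then have c1: "0 \<le> 1 - c\<^sup>2" by linarith
  then have a2: "a\<^sup>2 = 1 - c\<^sup>2" unfolding a_def by (rule real_sqrt_pow2)
  have a0: "a \<ge> 0" unfolding a_def using c1 by (rule real_sqrt_ge_zero)
  define f where "f p = (fst p * a * cos (snd p)) *\<^sub>R (axis 1 1::real^3) + (fst p * a * sin (snd p)) *\<^sub>R axis 2 1 + (fst p * c) *\<^sub>R axis 3 1" for p :: "real \<times> real"
  have "f differentiable_on UNIV"
    unfolding differentiable_on_def differentiable_def f_def
    by (auto intro!: derivative_eq_intros exI)
  then have neg: "negligible (f ` UNIV)" by (intro negligible_differentiable_image_lowdim) simp_all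
  have "sph_cone {\<xi> \<in> S2. \<xi> $ 3 = c} \<subseteq> f ` UNIV"
  proof
    fix x assume x: "x \<in> sph_cone {\<xi> \<in> S2. \<xi> $ 3 = c}"
    define r where "r = norm x"
    have r: "r > 0" and x3: "x $ 3 = c * r" using x by (auto simp: sph_cone_def r_def)
    have "r\<^sup>2 = (x$1)\<^sup>2 + (x$2)\<^sup>2 + (x$3)\<^sup>2" unfolding r_def by (rule norm3)
    moreover have "(r * a)\<^sup>2 = r\<^sup>2 - (c * r)\<^sup>2" unfolding power_mult_distrib a2 by (simp add: algebra_simps)
    ultimately have sq: "(x$1)\<^sup>2 + (x$2)\<^sup>2 = (r * a)\<^sup>2" using x3 by simp
    obtain t where t: "x$1 = r * a * cos t" "x$2 = r * a * sin t"
    proof (cases "r * a = 0")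
      case True
      then have "(x$1)\<^sup>2 + (x$2)\<^sup>2 = 0" using sq by simp
      then have "x$1 = 0" "x$2 = 0" by (simp_all add: sum_power2_eq_zero_iff)
      then show ?thesis using that[of 0] True by simp
    next
      case False
      have "(x$1 / (r*a))\<^sup>2 + (x$2 / (r*a))\<^sup>2 = 1" using sq False by (simp add: power_divide add_divide_distrib[symmetric])
      then obtain t where "x$1 / (r*a) = cos t" "x$2 / (r*a) = sin t" by (rule sincos_total_2pi)
      then show ?thesis using that[of t] False by (simp add: field_simps)
    qed
    have "x = f (r, t)"
      unfolding f_def vec_eq_iff forall_3 using t x3 by (simp add: axis_def)
    then show "x \<in> f ` UNIV" by blast
  qed
  then show ?thesis using neg negligible_subset by blast
qed


definition tri :: "real \<Rightarrow> nat \<Rightarrow> real^3 \<Rightarrow> real" where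
  "tri H m x = H / pi * arccos (cos (pi * real m * x $ 3))"

definition wv :: "real \<Rightarrow> nat \<Rightarrow> int \<Rightarrow> real^3" where
  "wv H m k = (if even k then H * real m else - (H * real m)) *\<^sub>R axis 3 1"

definition bv :: "real \<Rightarrow> int \<Rightarrow> real" where
  "bv H k = (if even k then - H * real_of_int k else H * (real_of_int k + 1))"

lemma tri_piece:
  assumes "real_of_int k \<le> real m * y $ 3" "real m * y $ 3 \<le> real_of_int k + 1"
  shows "tri H m y = wv H m k \<bullet> y + bv H k"
proof -
  define s where "s = pi * real m * y $ 3 - real_of_int k * pi"
  have s0: "0 \<le> s" using assms(1) by (simp add: s_def algebra_simps mult_left_mono)
  have s1: "s \<le> pi"
  proof -
    have "pi * (real m * y $ 3) \<le> pi * (real_of_int k + 1)" using assms(2) by (intro mult_left_mono) auto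
    then show ?thesis by (simp add: s_def algebra_simps)
  qed
  have wy: "wv H m k \<bullet> y = (if even k then H * real m * y $ 3 else - (H * real m * y $ 3))"
    by (simp add: wv_def inner_axis')
  show ?thesis
  proof (cases "even k")
    case True
    then obtain j where j: "k = 2 * j" by blast
    have "pi * real m * y $ 3 = s + of_int j * (2 * pi)" by (simp add: s_def j algebra_simps)
    then have "cos (pi * real m * y $ 3) = cos s" using cos.plus_of_int[of s j] by simp
    then have "tri H m y = H / pi * s" using s0 s1 by (simp add: tri_def arccos_cos)
    also have "\<dots> = H * (real m * y $ 3 - real_of_int k)" by (simp add: s_def field_simps)
    finally show ?thesis using True by (simp add: wy bv_def algebra_simps)
  next
    case False
    then obtain j where j: "k = 2 * j + 1" by (metis oddE)
    have "pi * real m * y $ 3 = (s + pi) + of_int j * (2 * pi)" by (simp add: s_def j algebra_simps)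
    then have "cos (pi * real m * y $ 3) = cos (s + pi)" using cos.plus_of_int[of "s + pi" j] by simp
    also have "\<dots> = cos (pi - s)" by (simp add: cos_periodic_pi)
    finally have "tri H m y = H / pi * arccos (cos (pi - s))" by (simp only: tri_def)
    also have "arccos (cos (pi - s)) = pi - s" using s0 s1 by (intro arccos_cos) auto
    finally have "tri H m y = H / pi * (pi - s)" .
    also have "\<dots> = H * (real_of_int k + 1 - real m * y $ 3)" by (simp add: s_def field_simps)
    finally show ?thesis using False by (simp add: wy bv_def algebra_simps)
  qed
qed

lemma tri_range: "H > 0 \<Longrightarrow> tri H m x \<in> {0..H}"
proof -
  assume H: "H > 0"
  have "0 \<le> arccos (cos (pi * real m * x $ 3)) \<and> arccos (cos (pi * real m * x $ 3)) \<le> pi"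
    by (rule arccos_bounded) auto
  then show ?thesis using H by (auto simp: tri_def field_simps)
qed

lemma tri_cont: "continuous_on A (tri H m)"
  unfolding tri_def by (intro continuous_intros) auto

lemma deriv_affine: "((\<lambda>y. w \<bullet> y + b) has_derivative (\<lambda>v. w \<bullet> v)) (at x)"
  by (intro has_derivative_add_const bounded_linear.has_derivative[OF bounded_linear_inner_right] has_derivative_ident)


definition band :: "nat \<Rightarrow> int \<Rightarrow> (real^3) set" where
  "band m k = {x \<in> S2. real_of_int k \<le> real m * x $ 3 \<and> real m * x $ 3 \<le> real_of_int k + 1}"

lemma closed_S2: "closed S2" by (simp add: S2_def)

lemma closure_sub_S2: "sph_domain \<Omega> \<Longrightarrow> closure \<Omega> \<subseteq> S2"
  using sph_domain_sub closed_S2 closure_minimal by blast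

lemma floor_piece:
  assumes m: "m > 0" and x: "x \<in> S2"
  obtains k where "k \<in> {- int m..int m - 1}" "real_of_int k \<le> real m * x $ 3" "real m * x $ 3 \<le> real_of_int k + 1"
proof -
  have b: "\<bar>x $ 3\<bar> \<le> 1" by (rule comp_le1[OF x])
  have b1: "-1 \<le> x $ 3" "x $ 3 \<le> 1" using b by auto
  have "real m * (-1) \<le> real m * x $ 3" using b1(1) by (rule mult_left_mono) simp
  then have lo: "- real m \<le> real m * x $ 3" by simp
  have "real m * x $ 3 \<le> real m * 1" using b1(2) by (rule mult_left_mono) simp
  then have hi: "real m * x $ 3 \<le> real m" by simp
  show ?thesis
  proof (cases "\<lfloor>real m * x $ 3\<rfloor> \<le> int m - 1")
    case True
    moreover have "- int m \<le> \<lfloor>real m * x $ 3\<rfloor>" using lo by linarith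
    moreover have "real_of_int \<lfloor>real m * x $ 3\<rfloor> \<le> real m * x $ 3" by (rule of_int_floor_le)
    moreover have "real m * x $ 3 \<le> real_of_int \<lfloor>real m * x $ 3\<rfloor> + 1" by linarith
    ultimately show ?thesis by (intro that[of "\<lfloor>real m * x $ 3\<rfloor>"]) auto
  next
    case False
    then have "real m * x $ 3 \<ge> real m" by linarith
    then show ?thesis using hi m by (intro that[of "int m - 1"]) auto
  qed
qed

lemma band_interior:
  assumes m: "m > 0" and x: "x \<in> S2" and lo: "real_of_int k < real m * x $ 3" and hi: "real m * x $ 3 < real_of_int k + 1"
  obtains e where "e > 0" "\<And>y. dist y x < e \<Longrightarrow> real_of_int k \<le> real m * y $ 3 \<and> real m * y $ 3 \<le> real_of_int k + 1"
proof -
  define e where "e = min (real m * x $ 3 - real_of_int k) (real_of_int k + 1 - real m * x $ 3) / real m"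
  have e: "e > 0" using lo hi m by (simp add: e_def)
  have "real_of_int k \<le> real m * y $ 3 \<and> real m * y $ 3 \<le> real_of_int k + 1" if "dist y x < e" for y
  proof -
    have "\<bar>y $ 3 - x $ 3\<bar> \<le> norm (y - x)" using component_le_norm_cart[of "y - x" 3] by simp
    then have "\<bar>y $ 3 - x $ 3\<bar> < e" using that by (simp add: dist_norm)
    then have "real m * \<bar>y $ 3 - x $ 3\<bar> < real m * e" using m by simp
    moreover have "real m * e = min (real m * x $ 3 - real_of_int k) (real_of_int k + 1 - real m * x $ 3)"
      using m by (simp add: e_def)
    moreover have "real m * \<bar>y $ 3 - x $ 3\<bar> = \<bar>real m * y $ 3 - real m * x $ 3\<bar>"
    proof -
      have "\<bar>real m * y $ 3 - real m * x $ 3\<bar> = \<bar>real m * (y $ 3 - x $ 3)\<bar>" by (simp add: right_diff_distrib)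
      also have "\<dots> = real m * \<bar>y $ 3 - x $ 3\<bar>" by (simp add: abs_mult)
      finally show ?thesis by simp
    qed
    ultimately show ?thesis by (auto simp: abs_less_iff min_def split: if_splits)
  qed
  then show ?thesis using e that by blast
qed

lemma tri_frakC:
  assumes dom: "sph_domain \<Omega>" and H: "H > 0" and m: "m > 0"
  shows "tri H m \<in> frakC \<Omega> H"
  unfolding frakC_def piecewise_C1_on_def
proof (intro CollectI conjI)
  show "tri H m ` closure \<Omega> \<subseteq> {0..H}" using tri_range[OF H] by blast
  show "continuous_on (closure \<Omega>) (tri H m)" by (rule tri_cont)
  show "\<exists>KK. finite KK \<and> closure \<Omega> \<subseteq> \<Union>KK \<and>
        (\<forall>K\<in>KK. closed K \<and> K \<subseteq> S2 \<and> sph_null (K - sph_interior K) \<and>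
           (\<exists>U g g'. open U \<and> K \<subseteq> U \<and>
              (\<forall>x\<in>U. (g has_derivative (\<lambda>v. g' x \<bullet> v)) (at x)) \<and>
              continuous_on U g' \<and> (\<forall>x\<in>K \<inter> closure \<Omega>. g x = tri H m x)))"
  proof (intro exI[of _ "band m ` {- int m..int m - 1}"] conjI ballI)
    show "finite (band m ` {- int m..int m - 1})" by simp
    show "closure \<Omega> \<subseteq> \<Union> (band m ` {- int m..int m - 1})"
    proof
      fix x assume "x \<in> closure \<Omega>"
      then have x: "x \<in> S2" using closure_sub_S2[OF dom] by blast
      from floor_piece[OF m x] obtain k where "k \<in> {- int m..int m - 1}" "real_of_int k \<le> real m * x $ 3" "real m * x $ 3 \<le> real_of_int k + 1" .
      then show "x \<in> \<Union> (band m ` {- int m..int m - 1})" using x by (auto simp: band_def)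
    qed
    fix K assume "K \<in> band m ` {- int m..int m - 1}"
    then obtain k where K: "K = band m k" by blast
    have "band m k = S2 \<inter> {x. real_of_int k \<le> real m * x $ 3} \<inter> {x. real m * x $ 3 \<le> real_of_int k + 1}"
      by (auto simp: band_def)
    moreover have "closed {x::real^3. real_of_int k \<le> real m * x $ 3}"
      by (intro closed_Collect_le continuous_intros continuous_on_component)
    moreover have "closed {x::real^3. real m * x $ 3 \<le> real_of_int k + 1}"
      by (intro closed_Collect_le continuous_intros continuous_on_component)
    ultimately show "closed K" unfolding K using closed_S2 by (metis closed_Int)
    show KS: "K \<subseteq> S2" by (auto simp: K band_def)
    have sub: "K - sph_interior K \<subseteq> {\<xi> \<in> S2. \<xi> $ 3 = real_of_int k / real m} \<union> {\<xi> \<in> S2. \<xi> $ 3 = (real_of_int k + 1) / real m}"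
    proof
      fix x assume x: "x \<in> K - sph_interior K"
      then have xS: "x \<in> S2" and b: "real_of_int k \<le> real m * x $ 3" "real m * x $ 3 \<le> real_of_int k + 1"
        by (auto simp: K band_def)
      show "x \<in> {\<xi> \<in> S2. \<xi> $ 3 = real_of_int k / real m} \<union> {\<xi> \<in> S2. \<xi> $ 3 = (real_of_int k + 1) / real m}"
      proof (rule ccontr)
        assume "\<not> ?thesis"
        then have "real m * x $ 3 \<noteq> real_of_int k" "real m * x $ 3 \<noteq> real_of_int k + 1"
          using xS m by (auto simp: field_simps)
        then have lo: "real_of_int k < real m * x $ 3" and hi: "real m * x $ 3 < real_of_int k + 1" using b by auto
        obtain e where e: "e > 0" "\<And>y. dist y x < e \<Longrightarrow> real_of_int k \<le> real m * y $ 3 \<and> real m * y $ 3 \<le> real_of_int k + 1"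
          using band_interior[OF m xS lo hi] by metis
        have "S2 \<inter> ball x e \<subseteq> K" using e(2) by (auto simp: K band_def dist_commute)
        then have "x \<in> sph_interior K" using x e(1) by (auto simp: sph_interior_def)
        then show False using x by blast
      qed
    qed
    show "sph_null (K - sph_interior K)"
      unfolding sph_null_def
    proof
      show "K - sph_interior K \<subseteq> S2" using KS by blast
      have "sph_cone (K - sph_interior K) \<subseteq> sph_cone {\<xi> \<in> S2. \<xi> $ 3 = real_of_int k / real m} \<union> sph_cone {\<xi> \<in> S2. \<xi> $ 3 = (real_of_int k + 1) / real m}"
        using cone_mono[OF sub] by (auto simp: sph_cone_def)
      moreover have "negligible (sph_cone {\<xi> \<in> S2. \<xi> $ 3 = real_of_int k / real m} \<union> sph_cone {\<xi> \<in> S2. \<xi> $ 3 = (real_of_int k + 1) / real m})"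
        by (intro negligible_Un level_null)
      ultimately show "sph_cone (K - sph_interior K) \<in> null_sets lebesgue"
        using negligible_subset negligible_iff_null_sets by blast
    qed
    show "\<exists>U g g'. open U \<and> K \<subseteq> U \<and>
              (\<forall>x\<in>U. (g has_derivative (\<lambda>v. g' x \<bullet> v)) (at x)) \<and>
              continuous_on U g' \<and> (\<forall>x\<in>K \<inter> closure \<Omega>. g x = tri H m x)"
    proof (intro exI[of _ UNIV] exI[of _ "\<lambda>y. wv H m k \<bullet> y + bv H k"] exI[of _ "\<lambda>_. wv H m k"] conjI ballI)
      show "continuous_on UNIV (\<lambda>_. wv H m k)" by simp
      fix x
      show "((\<lambda>y. wv H m k \<bullet> y + bv H k) has_derivative (\<lambda>v. wv H m k \<bullet> v)) (at x)" by (rule deriv_affine)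
      assume "x \<in> K \<inter> closure \<Omega>"
      then show "wv H m k \<bullet> x + bv H k = tri H m x" using tri_piece[of k m x H] by (auto simp: K band_def)
    qed auto
  qed
qed


lemma S2_sq: "\<xi> \<in> S2 \<Longrightarrow> (\<xi>$1)\<^sup>2 + (\<xi>$2)\<^sup>2 + (\<xi>$3)\<^sup>2 = 1"
  using norm3[of \<xi>] by (simp add: S2_iff)

lemma tri_grad:
  assumes m: "m > 0" and xi: "\<xi> \<in> S2" and nk: "\<And>k::int. real m * \<xi> $ 3 \<noteq> real_of_int k"
  shows "(norm (sph_grad (tri H m) \<xi>))\<^sup>2 = (H * real m)\<^sup>2 * ((\<xi>$1)\<^sup>2 + (\<xi>$2)\<^sup>2)"
proof -
  define k where "k = \<lfloor>real m * \<xi> $ 3\<rfloor>"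
  have "real_of_int k \<le> real m * \<xi> $ 3" unfolding k_def by (rule of_int_floor_le)
  then have lo: "real_of_int k < real m * \<xi> $ 3" using nk[of k] by linarith
  have hi: "real m * \<xi> $ 3 < real_of_int k + 1" unfolding k_def by linarith
  obtain e where e: "e > 0" "\<And>y. dist y \<xi> < e \<Longrightarrow> real_of_int k \<le> real m * y $ 3 \<and> real m * y $ 3 \<le> real_of_int k + 1"
    using band_interior[OF m xi lo hi] by metis
  define w where "w = wv H m k"
  have "sph_grad (tri H m) \<xi> = w - (w \<bullet> \<xi>) *\<^sub>R \<xi>"
    unfolding w_def
    by (rule sph_grad_eq[OF xi e(1) _ deriv_affine[of "wv H m k" "bv H k"]]) (use e(2) tri_piece in blast)
  then have "(norm (sph_grad (tri H m) \<xi>))\<^sup>2 = (w - (w \<bullet> \<xi>) *\<^sub>R \<xi>) \<bullet> (w - (w \<bullet> \<xi>) *\<^sub>R \<xi>)"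
    by (simp add: power2_norm_eq_inner)
  also have "\<dots> = w \<bullet> w - (w \<bullet> \<xi>)\<^sup>2"
    using S2_inner_self[OF xi]
    by (simp add: inner_diff_left inner_diff_right inner_commute power2_eq_square algebra_simps)
  also have "w \<bullet> w = (H * real m)\<^sup>2" by (simp add: w_def wv_def power2_eq_square)
  also have "(w \<bullet> \<xi>)\<^sup>2 = (H * real m)\<^sup>2 * (\<xi>$3)\<^sup>2" by (simp add: w_def wv_def inner_axis' power2_eq_square)
  finally have A: "(norm (sph_grad (tri H m) \<xi>))\<^sup>2 = (H * real m)\<^sup>2 - (H * real m)\<^sup>2 * (\<xi>$3)\<^sup>2" .
  have "(\<xi>$1)\<^sup>2 + (\<xi>$2)\<^sup>2 = 1 - (\<xi>$3)\<^sup>2" using S2_sq[OF xi] by linarith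
  then show ?thesis by (simp only: A right_diff_distrib mult_1_right)
qed


lemma cbox_measure3:
  assumes "\<And>i. a$i \<le> b$i"
  shows "measure lebesgue (cbox (a::real^3) b) = (b$1 - a$1) * (b$2 - a$2) * (b$3 - a$3)"
proof -
  have "cbox a b \<noteq> {}" using assms by (simp add: interval_ne_empty_cart less_eq_vec_def)
  then have "measure lborel (cbox a b) = prod (\<lambda>i. b$i - a$i) UNIV" by (rule content_cbox_cart)
  moreover have "measure lebesgue (cbox a b) = measure lborel (cbox a b)" by (rule measure_completion) simp
  moreover have "prod (\<lambda>i. b$i - a$i) (UNIV::3 set) = (b$1 - a$1) * (b$2 - a$2) * (b$3 - a$3)"
    unfolding UNIV_3 by simp
  ultimately show ?thesis by simp
qed
lemma int_ind_cbox: "integrable lebesgue (indicator (cbox (a::real^3) b) :: real^3 \<Rightarrow> real)"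
proof (rule integrable_real_indicator)
  have "cbox a b \<in> fmeasurable lebesgue" by (rule lmeasurable_cbox)
  then show "cbox a b \<in> sets lebesgue" "emeasure lebesgue (cbox a b) < \<infinity>"
    unfolding fmeasurable_def by blast+
qed

lemma tri_R1_le:
  assumes dom: "sph_domain \<Omega>" and H: "H > 0" and m: "m > 0" and s: "s > 0" and eta: "\<eta> \<ge> 0"
    and he: "1 \<le> \<eta> * (1 + (H * real m)\<^sup>2 * s\<^sup>2)"
  shows "R1 \<Omega> (tri H m) \<le> 3 * (8 * \<eta> + 8 * s\<^sup>2)"
proof -
  define G where "G x = indicator (sph_cone \<Omega>) x * (1 / (1 + (norm (sph_grad (tri H m) (x /\<^sub>R norm x)))\<^sup>2))" for x
  have pw: "piecewise_C1_on (closure \<Omega>) (tri H m)" using tri_frakC[OF dom H m] by (simp add: frakC_def)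
  have intG: "integrable lebesgue G" unfolding G_def by (rule R1_integrable[OF dom pw])
  define B where "B = cbox (\<chi> i::3. if i = 3 then -1 else - s) (\<chi> i. if i = 3 then 1 else s)"
  define C where "C = cbox (\<chi> (i::3). (-1::real)) (\<chi> i. 1)"
  define b where "b x = \<eta> * indicator C x + indicator B x" for x :: "real^3"
  have i1: "integrable lebesgue (indicator C :: real^3 \<Rightarrow> real)" unfolding C_def by (rule int_ind_cbox)
  have i2: "integrable lebesgue (indicator B :: real^3 \<Rightarrow> real)" unfolding B_def by (rule int_ind_cbox)
  have i1': "integrable lebesgue (\<lambda>x. \<eta> * indicator C x :: real)" using i1 by (rule Bochner_Integration.integrable_mult_right)
  have intb: "integrable lebesgue b" unfolding b_def using i1' i2 by (rule Bochner_Integration.integrable_add)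
  have mC: "measure lebesgue C = 8" unfolding C_def by (subst cbox_measure3) auto
  have mB: "measure lebesgue B = 8 * s\<^sup>2" unfolding B_def using s by (subst cbox_measure3) (auto simp: power2_eq_square)
  have "integral\<^sup>L lebesgue b = integral\<^sup>L lebesgue (\<lambda>x. \<eta> * indicator C x) + integral\<^sup>L lebesgue (indicator B)"
    unfolding b_def using i1' i2 by (rule Bochner_Integration.integral_add)
  also have "\<dots> = \<eta> * measure lebesgue C + measure lebesgue B" by simp
  finally have ib: "integral\<^sup>L lebesgue b = 8 * \<eta> + 8 * s\<^sup>2" using mC mB by simp
  define E where "E = (\<Union>k\<in>{- int m..int m}. sph_cone {\<xi> \<in> S2. \<xi> $ 3 = real_of_int k / real m})"
  have negE: "negligible E" unfolding E_def by (intro negligible_Union) (auto intro: level_null)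
  have G01: "0 \<le> G x \<and> G x \<le> 1" for x
  proof -
    have "1 \<le> 1 + (norm (sph_grad (tri H m) (x /\<^sub>R norm x)))\<^sup>2" by simp
    then show ?thesis unfolding G_def by (simp add: divide_le_eq_1 add_pos_nonneg indicator_def)
  qed
  have b0: "0 \<le> b x" for x using eta by (simp add: b_def)
  have bound: "G x \<le> b x" if xE: "x \<notin> E" for x
  proof (cases "x \<in> sph_cone \<Omega>")
    case False
    then show ?thesis using b0[of x] by (simp add: G_def)
  next
    case True
    define \<xi> where "\<xi> = x /\<^sub>R norm x"
    have x0: "x \<noteq> 0" and x1: "norm x \<le> 1" and xiO: "\<xi> \<in> \<Omega>" using True by (auto simp: sph_cone_def \<xi>_def)
    have xi: "\<xi> \<in> S2" using xiO sph_domain_sub[OF dom] by blast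
    have nk: "real m * \<xi> $ 3 \<noteq> real_of_int k" for k :: int
    proof
      assume eq: "real m * \<xi> $ 3 = real_of_int k"
      have "\<bar>\<xi> $ 3\<bar> \<le> 1" by (rule comp_le1[OF xi])
      then have "\<bar>real m * \<xi> $ 3\<bar> \<le> real m" using m by (simp add: abs_mult mult_left_le)
      then have "k \<in> {- int m..int m}" using eq by auto
      moreover have "\<xi> $ 3 = real_of_int k / real m" using eq m by (simp add: field_simps)
      ultimately have "x \<in> E" using True x0 x1 xi by (auto simp: E_def sph_cone_def \<xi>_def)
      then show False using xE by blast
    qed
    have gr: "(norm (sph_grad (tri H m) \<xi>))\<^sup>2 = (H * real m)\<^sup>2 * ((\<xi>$1)\<^sup>2 + (\<xi>$2)\<^sup>2)"
      by (rule tri_grad[OF m xi nk])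
    have Gx: "G x = 1 / (1 + (H * real m)\<^sup>2 * ((\<xi>$1)\<^sup>2 + (\<xi>$2)\<^sup>2))"
      using True gr by (simp add: G_def \<xi>_def)
    have xcomp: "x $ i = norm x * \<xi> $ i" for i using x0 by (simp add: \<xi>_def)
    show ?thesis
    proof (cases "(\<xi>$1)\<^sup>2 + (\<xi>$2)\<^sup>2 \<ge> s\<^sup>2")
      case True
      have "(H * real m)\<^sup>2 * s\<^sup>2 \<le> (H * real m)\<^sup>2 * ((\<xi>$1)\<^sup>2 + (\<xi>$2)\<^sup>2)"
        using True by (intro mult_left_mono) auto
      then have q1: "1 + (H * real m)\<^sup>2 * s\<^sup>2 \<le> 1 + (H * real m)\<^sup>2 * ((\<xi>$1)\<^sup>2 + (\<xi>$2)\<^sup>2)" by linarith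
      have P0: "0 \<le> (H * real m)\<^sup>2 * s\<^sup>2" by simp
      have q2: "0 < (1 + (H * real m)\<^sup>2 * ((\<xi>$1)\<^sup>2 + (\<xi>$2)\<^sup>2)) * (1 + (H * real m)\<^sup>2 * s\<^sup>2)"
        using P0 q1 by (intro mult_pos_pos) linarith+
      have "1 / (1 + (H * real m)\<^sup>2 * ((\<xi>$1)\<^sup>2 + (\<xi>$2)\<^sup>2)) \<le> 1 / (1 + (H * real m)\<^sup>2 * s\<^sup>2)"
        using divide_left_mono[OF q1, of 1] q2 by simp
      then have "G x \<le> 1 / (1 + (H * real m)\<^sup>2 * s\<^sup>2)" unfolding Gx .
      also have "\<dots> \<le> \<eta>"
      proof (subst pos_divide_le_eq)
        show "0 < 1 + (H * real m)\<^sup>2 * s\<^sup>2" using P0 by linarith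
        show "1 \<le> \<eta> * (1 + (H * real m)\<^sup>2 * s\<^sup>2)" by (rule he)
      qed
      finally have "G x \<le> \<eta>" .
      moreover have "x \<in> C"
      proof -
        have "\<bar>x $ i\<bar> \<le> 1" for i using component_le_norm_cart[of x i] x1 by linarith
        then show ?thesis unfolding C_def mem_box_cart(2) by (auto simp: abs_le_iff)
      qed
      ultimately have "G x \<le> \<eta>" "b x = \<eta> + indicator B x" by (simp_all add: b_def)
      moreover have "0 \<le> (indicator B x :: real)" by (rule indicator_pos_le)
      ultimately show ?thesis by linarith
    next
      case False
      have n2: "(norm x)\<^sup>2 \<le> 1" using x1 by (simp add: abs_square_le_1)
      have "(x$1)\<^sup>2 + (x$2)\<^sup>2 = (norm x)\<^sup>2 * ((\<xi>$1)\<^sup>2 + (\<xi>$2)\<^sup>2)"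
        by (simp add: xcomp power_mult_distrib algebra_simps)
      also have "\<dots> \<le> (\<xi>$1)\<^sup>2 + (\<xi>$2)\<^sup>2" using n2 by (intro mult_left_le_one_le) auto
      finally have sum: "(x$1)\<^sup>2 + (x$2)\<^sup>2 < s\<^sup>2" using False by linarith
      have z1: "0 \<le> (x$1)\<^sup>2" "0 \<le> (x$2)\<^sup>2" by simp_all
      have "(x$1)\<^sup>2 < s\<^sup>2" "(x$2)\<^sup>2 < s\<^sup>2" using sum z1 by linarith+
      then have A: "\<bar>x$1\<bar>\<^sup>2 < s\<^sup>2" "\<bar>x$2\<bar>\<^sup>2 < s\<^sup>2" by simp_all
      have "\<bar>x$1\<bar> < s" by (rule power2_less_imp_less[OF A(1)]) (use s in linarith)
      moreover have "\<bar>x$2\<bar> < s" by (rule power2_less_imp_less[OF A(2)]) (use s in linarith)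
      ultimately have "\<bar>x$1\<bar> < s" "\<bar>x$2\<bar> < s" by simp_all
      moreover have "\<bar>x$3\<bar> \<le> 1" using component_le_norm_cart[of x 3] x1 by linarith
      ultimately have "x \<in> B" unfolding B_def mem_box_cart(2) by (auto simp: forall_3 abs_le_iff abs_less_iff)
      then have "b x \<ge> 1" using b0 eta by (simp add: b_def indicator_def)
      then show ?thesis using G01[of x] by linarith
    qed
  qed
  have "AE x in lebesgue. G x \<le> b x"
    unfolding eventually_ae_filter_negligible using negE bound by blast
  then have "integral\<^sup>L lebesgue G \<le> integral\<^sup>L lebesgue b" by (rule integral_mono_AE[OF intG intb])
  moreover have "R1 \<Omega> (tri H m) = 3 * integral\<^sup>L lebesgue G"
    unfolding R1_def sph_integral_def G_def by simp
  ultimately show ?thesis using ib by simp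
qed



lemma small_R1:
  assumes dom: "sph_domain \<Omega>" and H: "H > 0" and e: "\<epsilon> > 0"
  shows "\<exists>u\<in>frakC \<Omega> H. R1 \<Omega> u < \<epsilon>"
proof -
  define s where "s = sqrt (\<epsilon> / 100)"
  define \<eta> where "\<eta> = \<epsilon> / 100"
  have s: "s > 0" using e by (simp add: s_def)
  have s2: "s\<^sup>2 = \<epsilon> / 100" using e by (simp add: s_def)
  have eta: "\<eta> \<ge> 0" using e by (simp add: \<eta>_def)
  obtain m :: nat where mgt: "100 / (H * \<epsilon>) < real m" using reals_Archimedean2 by blast
  have "0 < 100 / (H * \<epsilon>)" using H e by simp
  then have m: "m > 0" using mgt by linarith
  define q where "q = H * real m * \<epsilon> / 100"
  have "100 < H * \<epsilon> * real m" using mgt H e by (simp add: divide_less_eq mult.commute)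
  then have q1: "1 \<le> q" by (simp add: q_def algebra_simps)
  have "1 \<le> q\<^sup>2" using q1 by (metis one_le_power)
  also have "q\<^sup>2 = \<eta> * ((H * real m)\<^sup>2 * s\<^sup>2)"
  proof -
    have "q\<^sup>2 = (H * real m) * (H * real m) * (\<epsilon> / 100) * (\<epsilon> / 100)" by (simp add: q_def power2_eq_square)
    also have "\<dots> = \<eta> * ((H * real m)\<^sup>2 * (\<epsilon> / 100))" by (simp add: \<eta>_def power2_eq_square)
    finally show ?thesis by (simp only: s2)
  qed
  also have "\<dots> \<le> \<eta> * (1 + (H * real m)\<^sup>2 * s\<^sup>2)" using eta by (intro mult_left_mono) auto
  finally have he: "1 \<le> \<eta> * (1 + (H * real m)\<^sup>2 * s\<^sup>2)" .
  have "R1 \<Omega> (tri H m) \<le> 3 * (8 * \<eta> + 8 * s\<^sup>2)" by (rule tri_R1_le[OF dom H m s eta he])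
  also have "\<dots> < \<epsilon>" using e by (simp add: \<eta>_def s2)
  finally show ?thesis using tri_frakC[OF dom H m] by blast
qed

theorem proposition2p6:
  fixes \<Omega> :: "(real^3) set" and H :: real
  assumes "sph_domain \<Omega>" and "H > 0"
  shows "Inf (R1 \<Omega> ` frakC \<Omega> H) = 0 \<and>
         \<not> (\<exists>u\<in>frakC \<Omega> H. \<forall>v\<in>frakC \<Omega> H. R1 \<Omega> u \<le> R1 \<Omega> v)"
proof
  have pos: "R1 \<Omega> u > 0" if "u \<in> frakC \<Omega> H" for u
    using R1_pos[OF assms(1)] that by (simp add: frakC_def)
  have ne: "R1 \<Omega> ` frakC \<Omega> H \<noteq> {}" using tri_frakC[OF assms, of 1] by auto
  have bdd: "bdd_below (R1 \<Omega> ` frakC \<Omega> H)"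
    using pos by (intro bdd_belowI[of _ 0]) (auto intro: less_imp_le)
  have ge: "0 \<le> Inf (R1 \<Omega> ` frakC \<Omega> H)"
    using ne pos by (intro cInf_greatest) (auto intro: less_imp_le)
  have "\<not> Inf (R1 \<Omega> ` frakC \<Omega> H) > 0"
  proof
    assume "Inf (R1 \<Omega> ` frakC \<Omega> H) > 0"
    then obtain u where u: "u \<in> frakC \<Omega> H" "R1 \<Omega> u < Inf (R1 \<Omega> ` frakC \<Omega> H)"
      using small_R1[OF assms] by blast
    have "Inf (R1 \<Omega> ` frakC \<Omega> H) \<le> R1 \<Omega> u" using bdd u(1) by (intro cInf_lower) auto
    then show False using u(2) by simp
  qed
  then show "Inf (R1 \<Omega> ` frakC \<Omega> H) = 0" using ge by simp
  show "\<not> (\<exists>u\<in>frakC \<Omega> H. \<forall>v\<in>frakC \<Omega> H. R1 \<Omega> u \<le> R1 \<Omega> v)"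
  proof
    assume "\<exists>u\<in>frakC \<Omega> H. \<forall>v\<in>frakC \<Omega> H. R1 \<Omega> u \<le> R1 \<Omega> v"
    then obtain u where u: "u \<in> frakC \<Omega> H" "\<And>v. v \<in> frakC \<Omega> H \<Longrightarrow> R1 \<Omega> u \<le> R1 \<Omega> v" by blast
    obtain v where "v \<in> frakC \<Omega> H" "R1 \<Omega> v < R1 \<Omega> u" using small_R1[OF assms pos[OF u(1)]] by blast
    then show False using u(2) by fastforce
  qed
qed


end
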